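(* Let $\mathbb F_q$ be a finite field of characteristic $p$, and let $(G_i,S_i)_i$ be a sequence where each $G_i$ is a finite abelian group with $p\nmid|G_i|$, and $S_i\subset\widehat{G_i}$ is a subset of the $\overline{\mathbb F}_q^\times$-valued character group which is Galois-stable: if $\chi\in S_i$ then $\chi^\sigma\in S_i$ for all $\sigma\in\mathrm{Gal}(\overline{\mathbb F}_q/\mathbb F_q)$. Let $\widehat{H_{S_i}}\subset\widehat{G_i}$ be the subgroup generated by $S_i$. Suppose $|G_i|\to\infty$ and there is $0<\delta<1$ with $|\widehat{H_{S_i}}|\gg|G_i|^\delta$. Then for every $\epsilon>0$, $|S_i|\gg_\epsilon(\ln|G_i|)^{1-\epsilon}$. *)

theory Defs
  imports "HOL-Analysis.Analysis" "HOL-Algebra.Algebraic_Closure_Type"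
begin

text \<open>Characters are taken extensional:
  value 1 outside the carrier, so that distinct characters are distinct functions.\<close>

definition characters :: "('a, 'b) monoid_scheme \<Rightarrow> ('a \<Rightarrow> 'k::field) set" where
  "characters G = {ch. (\<forall>x\<in>carrier G. ch x \<noteq> 0)
      \<and> (\<forall>x\<in>carrier G. \<forall>y\<in>carrier G. ch (x \<otimes>\<^bsub>G\<^esub> y) = ch x * ch y)
      \<and> (\<forall>x. x \<notin> carrier G \<longrightarrow> ch x = 1)}"

definition char_group :: "('a, 'b) monoid_scheme \<Rightarrow> ('a \<Rightarrow> 'k::field) monoid" where
  "char_group G = \<lparr>carrier = characters G, mult = (\<lambda>ch ps x. ch x * ps x), one = (\<lambda>x. 1)\<rparr>"

definition galois_auts :: "('f::{field,finite} alg_closure \<Rightarrow> 'f alg_closure) set" where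
  "galois_auts = {\<sigma>. bij \<sigma> \<and> (\<forall>x y. \<sigma> (x + y) = \<sigma> x + \<sigma> y) \<and> (\<forall>x y. \<sigma> (x * y) = \<sigma> x * \<sigma> y)
      \<and> (\<forall>a. \<sigma> (to_ac a) = to_ac a)}"

definition galois_stable :: "('a \<Rightarrow> 'f::{field,finite} alg_closure) set \<Rightarrow> bool" where
  "galois_stable S \<longleftrightarrow> (\<forall>ch\<in>S. \<forall>\<sigma>\<in>galois_auts. \<sigma> \<circ> ch \<in> S)"

end

theory Submission
  imports Defs "HOL-Computational_Algebra.Computational_Algebra"
begin


lemma frob_exists:
  "\<exists>e::nat. e \<ge> 2 \<and> (\<lambda>x::'f::{field,finite} alg_closure. x ^ e) \<in> galois_auts"
proof -
  define p where "p = CHAR('f)"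
  have "CHAR('f) > 0" by (rule finite_imp_CHAR_pos) simp
  hence pp: "Factorial_Ring.prime p" unfolding p_def by (rule prime_CHAR_semidom)
  define F where "F = (\<lambda>a::'f. a ^ p)"
  have Finj: "inj F"
  proof (rule injI)
    fix a b assume "F a = F b"
    have "(a - b + b) ^ p = (a - b) ^ p + b ^ p"
      by (rule freshmans_dream) (use pp in \<open>auto simp: p_def\<close>)
    with \<open>F a = F b\<close> have "(a - b) ^ p = 0" by (simp add: F_def)
    thus "a = b" by simp
  qed
  have Fpow: "(F ^^ n) a = a ^ (p ^ n)" for n a
    by (induction n) (auto simp: F_def power_mult[symmetric] mult.commute)
  have "\<not> inj (\<lambda>n::nat. F ^^ n)"
  proof
    assume "inj (\<lambda>n::nat. F ^^ n)"
    moreover have "finite (range (\<lambda>n::nat. F ^^ n))" by simp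
    ultimately have "finite (UNIV :: nat set)" using finite_imageD by blast
    thus False by simp
  qed
  then obtain i j :: nat where ij: "i < j" "F ^^ i = F ^^ j"
    by (metis injI linorder_neqE_nat)
  define k where "k = j - i"
  have k: "k \<ge> 1" using ij by (simp add: k_def)
  have "j = i + k" using ij by (simp add: k_def)
  hence "F ^^ j = F ^^ i \<circ> F ^^ k" by (simp add: funpow_add)
  hence fix1: "(F ^^ k) a = a" for a
    using ij(2) inj_fn[OF Finj, of i] by (metis comp_apply injD)
  define e where "e = p ^ k"
  have e2: "e \<ge> 2"
  proof -
    have "p \<ge> 2" using pp prime_ge_2_nat by blast
    hence "p ^ 1 \<le> p ^ k" using k by (intro power_increasing) auto
    thus ?thesis using \<open>p \<ge> 2\<close> by (simp add: e_def)
  qed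
  have fixe: "a ^ e = a" for a :: 'f using fix1[of a] by (simp add: Fpow e_def)
  have ppa: "Factorial_Ring.prime CHAR('f alg_closure)" using pp by (simp add: p_def)
  have add: "(x + y) ^ e = x ^ e + y ^ e" for x y :: "'f alg_closure"
    by (rule freshmans_dream'[OF ppa]) (simp add: e_def p_def)
  have inj: "inj (\<lambda>x::'f alg_closure. x ^ e)"
  proof (rule injI)
    fix x y :: "'f alg_closure" assume "x ^ e = y ^ e"
    with add[of "x - y" y] have "(x - y) ^ e = 0" by simp
    thus "x = y" by simp
  qed
  have surj: "surj (\<lambda>x::'f alg_closure. x ^ e)"
  proof -
    have "\<exists>y. y ^ e = (x :: 'f alg_closure)" for x
      by (rule nth_root_exists) (use e2 in auto)
    thus ?thesis by (metis surjI)
  qed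
  have "(\<lambda>x::'f alg_closure. x ^ e) \<in> galois_auts"
    unfolding galois_auts_def
    using inj surj add fixe
    by (auto simp: bij_def power_mult_distrib simp flip: to_ac_power)
  thus ?thesis using e2 by blast
qed



lemma (in comm_group) gen_bound:
  fixes e :: nat
  assumes e2: "e \<ge> 2" and injf: "inj_on (\<lambda>x. x [^] e) (carrier G)"
  shows "finite T \<Longrightarrow> T \<subseteq> carrier G \<Longrightarrow> (\<forall>x\<in>T. x [^] e \<in> T) \<Longrightarrow>
    finite (generate G T) \<and> card (generate G T) \<le> e ^ card T"
proof (induction "card T" arbitrary: T rule: less_induct)
  case less
  show ?case
  proof (cases "T = {}")
    case True thus ?thesis by (simp add: generate_empty)
  next
    case False
    then obtain y0 where y0: "y0 \<in> T" by blast
    define f where "f = (\<lambda>x. x [^] e)"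
    have fpow: "(f^^n) x = x [^] (e^n)" if "x \<in> carrier G" for n x
      using that by (induction n) (simp_all add: f_def nat_pow_pow mult.commute)
    have Tc: "\<And>x. x\<in>T \<Longrightarrow> x \<in> carrier G" using less by auto
    have y0c: "y0 \<in> carrier G" using Tc y0 .
    have fc: "x \<in> carrier G \<Longrightarrow> f x \<in> carrier G" for x by (simp add: f_def)
    have fnc: "x \<in> carrier G \<Longrightarrow> (f^^n) x \<in> carrier G" for x n by (simp add: fpow)
    have fT: "x \<in> T \<Longrightarrow> f x \<in> T" for x using less.prems(3) f_def by auto
    have fnT: "(f^^n) y0 \<in> T" for n by (induction n) (auto simp: y0 fT)
    define Orb where "Orb = {(f^^n) y0 | n. True}"
    have OrbT: "Orb \<subseteq> T" using fnT Orb_def by auto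
    have finO: "finite Orb" using OrbT less.prems(1) finite_subset by auto
    have y0O: "y0 \<in> Orb" unfolding Orb_def by (auto intro: exI[of _ 0])
    have "\<not> inj_on (\<lambda>n. (f^^n) y0) {0..card Orb}"
    proof
      assume "inj_on (\<lambda>n. (f^^n) y0) {0..card Orb}"
      hence "card ((\<lambda>n. (f^^n) y0) ` {0..card Orb}) = card {0..card Orb}" by (rule card_image)
      moreover have "(\<lambda>n. (f^^n) y0) ` {0..card Orb} \<subseteq> Orb" unfolding Orb_def by auto
      hence "card ((\<lambda>n. (f^^n) y0) ` {0..card Orb}) \<le> card Orb" using finO card_mono by blast
      ultimately show False by simp
    qed
    then obtain i j where ij: "i < j" "j \<le> card Orb" "(f^^i) y0 = (f^^j) y0"
      unfolding inj_on_def by (metis atLeastAtMost_iff linorder_neqE_nat)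
    define m where "m = j - i"
    have m: "1 \<le> m" "m \<le> card Orb" using ij by (auto simp: m_def)
    have finj: "inj_on (f^^n) (carrier G)" for n
    proof (induction n)
      case (Suc n)
      have "inj_on f ((f^^n) ` carrier G)"
        using inj_on_subset[OF injf[folded f_def]] fnc by blast
      thus ?case using Suc comp_inj_on by (metis funpow.simps(2))
    qed simp
    have "j = i + m" using ij by (simp add: m_def)
    hence "(f^^i) ((f^^m) y0) = (f^^i) y0" using ij(3) by (simp add: funpow_add)
    hence fm: "(f^^m) y0 = y0" using finj[of i] fnc y0c by (meson inj_onD)
    hence pm: "y0 [^] (e^m) = y0" using fpow y0c by simp
    define M where "M = e^m - 1"
    have "e ^ 1 \<le> e ^ m" using m e2 by (intro power_increasing) auto
    hence em: "e^m = Suc M" "M \<ge> 1" using e2 by (auto simp: M_def)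
    have "y0 [^] M \<otimes> y0 = y0" using pm em by simp
    hence "y0 [^] M = \<one>" using y0c by simp
    hence "ord y0 dvd M" using pow_eq_id y0c by blast
    hence ordle: "ord y0 \<le> M" "ord y0 > 0" using em by (auto intro: dvd_imp_le)
    define A where "A = generate G {y0}"
    have cardA: "card A = ord y0" using generate_pow_card y0c by (simp add: A_def)
    have finA: "finite A" using cardA ordle(2) card_ge_0_finite by metis
    have "e ^ m \<le> e ^ card Orb" using m e2 by (intro power_increasing) auto
    hence cardA': "card A \<le> e ^ card Orb" using cardA ordle em by linarith
    have Asub: "subgroup A G" unfolding A_def using y0c by (intro generate_is_subgroup) auto
    define T' where "T' = T - Orb"
    have T'sub: "T' \<subset> T" using y0 y0O T'_def by auto
    have cT': "card T' < card T" using less.prems(1) T'sub psubset_card_mono by blast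
    have T'st: "\<forall>x\<in>T'. x [^] e \<in> T'"
    proof
      fix x assume x: "x \<in> T'"
      hence xT: "x \<in> T" "x \<notin> Orb" by (auto simp: T'_def)
      have "f x \<notin> Orb"
      proof
        assume "f x \<in> Orb"
        then obtain n where n: "f x = (f^^n) y0" unfolding Orb_def by auto
        have "\<exists>n'. f x = f ((f^^n') y0)"
        proof (cases n)
          case 0
          have "f x = (f^^m) y0" using n 0 fm by simp
          also have "(f^^m) y0 = f ((f^^(m-1)) y0)" using m
            by (metis Suc_diff_1 comp_apply funpow.simps(2) less_le_trans zero_less_one)
          finally show ?thesis by blast
        next
          case (Suc k) thus ?thesis using n by auto
        qed
        then obtain n' where "f x = f ((f^^n') y0)" by blast
        hence "x = (f^^n') y0" using injf[folded f_def] Tc xT(1) fnc y0c by (meson inj_onD)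
        thus False using xT(2) unfolding Orb_def by auto
      qed
      thus "x [^] e \<in> T'" using fT[OF xT(1)] by (auto simp: T'_def f_def)
    qed
    have IH: "finite (generate G T') \<and> card (generate G T') \<le> e ^ card T'"
      using less.hyps[OF cT'] less.prems T'st T'_def by auto
    define B where "B = generate G T'"
    have Bsub: "subgroup B G" unfolding B_def using less.prems(2) T'_def
      by (intro generate_is_subgroup) auto
    define P where "P = (\<lambda>(a,b). a \<otimes> b) ` (A \<times> B)"
    have oneA: "\<one> \<in> A" using Asub subgroup.one_closed by blast
    have oneB: "\<one> \<in> B" using Bsub subgroup.one_closed by blast
    have Ac: "a \<in> A \<Longrightarrow> a \<in> carrier G" for a by (rule subgroup.mem_carrier[OF Asub])
    have Bc: "b \<in> B \<Longrightarrow> b \<in> carrier G" for b by (rule subgroup.mem_carrier[OF Bsub])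
    have OA: "h \<in> Orb \<Longrightarrow> h \<in> A" for h
    proof -
      assume "h \<in> Orb"
      then obtain n where "h = (f^^n) y0" unfolding Orb_def by auto
      hence "h = y0 [^] (e^n)" using fpow y0c by simp
      hence "h = y0 [^] (int (e^n))" by (simp only: int_pow_int)
      thus "h \<in> A" unfolding A_def using generate_pow[OF y0c] by blast
    qed
    have Pin: "a \<in> A \<Longrightarrow> b \<in> B \<Longrightarrow> a \<otimes> b \<in> P" for a b
      unfolding P_def by (rule image_eqI[where x="(a,b)"]) auto
    have sub: "generate G T \<subseteq> P"
    proof
      fix x assume "x \<in> generate G T"
      thus "x \<in> P"
      proof (induction rule: generate.induct)
        case one
        have "\<one> = \<one> \<otimes> \<one>" by simp
        thus ?case using Pin[OF oneA oneB] by simp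
      next
        case (incl h)
        show ?case
        proof (cases "h \<in> Orb")
          case True
          hence "h \<in> A" by (rule OA)
          have "h \<otimes> \<one> \<in> P" by (rule Pin[OF \<open>h \<in> A\<close> oneB])
          thus ?thesis using Ac \<open>h \<in> A\<close> by simp
        next
          case False
          have "h \<in> T'" using incl False by (simp add: T'_def)
          hence "h \<in> B" unfolding B_def by (rule generate.incl)
          have "\<one> \<otimes> h \<in> P" by (rule Pin[OF oneA \<open>h \<in> B\<close>])
          thus ?thesis using Bc \<open>h \<in> B\<close> by simp
        qed
      next
        case (inv h)
        show ?case
        proof (cases "h \<in> Orb")
          case True
          hence "inv h \<in> A" using OA subgroup.m_inv_closed[OF Asub] by simp
          have "inv h \<otimes> \<one> \<in> P" by (rule Pin[OF \<open>inv h \<in> A\<close> oneB])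
          thus ?thesis using Ac \<open>inv h \<in> A\<close> by simp
        next
          case False
          have "h \<in> T'" using inv False by (simp add: T'_def)
          hence "inv h \<in> B" unfolding B_def by (rule generate.inv)
          have "\<one> \<otimes> inv h \<in> P" by (rule Pin[OF oneA \<open>inv h \<in> B\<close>])
          thus ?thesis using Bc \<open>inv h \<in> B\<close> by simp
        qed
      next
        case (eng h1 h2)
        then obtain a1 b1 a2 b2 where ab: "a1 \<in> A" "b1 \<in> B" "a2 \<in> A" "b2 \<in> B"
          "h1 = a1 \<otimes> b1" "h2 = a2 \<otimes> b2" unfolding P_def by auto
        have c: "a1 \<in> carrier G" "b1 \<in> carrier G" "a2 \<in> carrier G" "b2 \<in> carrier G"
          using ab(1-4) Ac Bc by auto
        have eq0: "b1 \<otimes> (a2 \<otimes> b2) = a2 \<otimes> (b1 \<otimes> b2)" using c by (intro m_lcomm)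
        have eq: "h1 \<otimes> h2 = (a1 \<otimes> a2) \<otimes> (b1 \<otimes> b2)"
          unfolding ab(5,6) using c by (simp add: m_assoc eq0)
        have inA: "a1 \<otimes> a2 \<in> A" using ab(1,3) subgroup.m_closed[OF Asub] by simp
        have inB: "b1 \<otimes> b2 \<in> B" using ab(2,4) subgroup.m_closed[OF Bsub] by simp
        show ?case unfolding eq by (rule Pin[OF inA inB])
      qed
    qed
    have finB: "finite B" using IH B_def by simp
    have finP: "finite P" unfolding P_def by (intro finite_imageI finite_cartesian_product finA finB)
    have "card P \<le> card (A \<times> B)" unfolding P_def by (rule card_image_le) (simp add: finA finB)
    also have "\<dots> = card A * card B" by (simp add: card_cartesian_product)
    also have "\<dots> \<le> e ^ card Orb * e ^ card T'"
      using cardA' IH B_def by (intro mult_mono) auto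
    also have "\<dots> = e ^ card T"
    proof -
      have "card T = card Orb + card T'" unfolding T'_def
        using OrbT finO less.prems(1) by (simp add: card_Diff_subset card_mono)
      thus ?thesis by (simp add: power_add)
    qed
    finally have "card P \<le> e ^ card T" .
    have "finite (generate G T)" using finite_subset[OF sub finP] .
    moreover have "card (generate G T) \<le> card P" by (rule card_mono[OF finP sub])
    ultimately show ?thesis using \<open>card P \<le> e ^ card T\<close> by linarith
  qed
qed



lemma char_group_comm:
  assumes "group G"
  shows "comm_group (char_group G :: ('a \<Rightarrow> 'k::field) monoid)"
proof -
  interpret G: group G by fact
  show ?thesis
  proof (rule comm_groupI)
    fix x y :: "'a \<Rightarrow> 'k"
    assume "x \<in> carrier (char_group G)" "y \<in> carrier (char_group G)"
    thus "x \<otimes>\<^bsub>char_group G\<^esub> y \<in> carrier (char_group G)"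
      by (auto simp: char_group_def characters_def mult_ac)
  next
    show "\<one>\<^bsub>char_group G\<^esub> \<in> carrier (char_group G)"
      by (auto simp: char_group_def characters_def)
  next
    fix x y z :: "'a \<Rightarrow> 'k"
    show "x \<otimes>\<^bsub>char_group G\<^esub> y \<otimes>\<^bsub>char_group G\<^esub> z = x \<otimes>\<^bsub>char_group G\<^esub> (y \<otimes>\<^bsub>char_group G\<^esub> z)"
      by (simp add: char_group_def mult_ac)
  next
    fix x y :: "'a \<Rightarrow> 'k"
    show "x \<otimes>\<^bsub>char_group G\<^esub> y = y \<otimes>\<^bsub>char_group G\<^esub> x"
      by (simp add: char_group_def mult_ac)
  next
    fix x :: "'a \<Rightarrow> 'k"
    show "\<one>\<^bsub>char_group G\<^esub> \<otimes>\<^bsub>char_group G\<^esub> x = x"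
      by (simp add: char_group_def)
  next
    fix x :: "'a \<Rightarrow> 'k"
    assume x: "x \<in> carrier (char_group G)"
    hence xc: "x \<in> characters G" by (simp add: char_group_def)
    define y where "y = (\<lambda>a. inverse (x a))"
    have "y \<in> characters G" using xc unfolding characters_def y_def
      by (auto simp: inverse_mult_distrib)
    moreover have "y \<otimes>\<^bsub>char_group G\<^esub> x = \<one>\<^bsub>char_group G\<^esub>"
    proof -
      have "inverse (x a) * x a = 1" for a
      proof (cases "a \<in> carrier G")
        case True
        hence "x a \<noteq> 0" using xc unfolding characters_def by blast
        thus ?thesis by simp
      next
        case False
        hence "x a = 1" using xc unfolding characters_def by blast
        thus ?thesis by simp
      qed
      thus ?thesis by (simp add: char_group_def y_def)
    qed
    ultimately show "\<exists>y\<in>carrier (char_group G). y \<otimes>\<^bsub>char_group G\<^esub> x = \<one>\<^bsub>char_group G\<^esub>"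
      by (auto simp: char_group_def)
  qed
qed

lemma char_pow: "x [^]\<^bsub>char_group G\<^esub> (n::nat) = (\<lambda>a. (x a :: 'k::field) ^ n)"
  by (induction n) (simp_all add: char_group_def mult.commute)


theorem mainTheorem6:
  fixes G :: "nat \<Rightarrow> 'a monoid"
    and S :: "nat \<Rightarrow> ('a \<Rightarrow> 'f::{field,finite} alg_closure) set"
    and \<delta> c :: real
  assumes grp: "\<And>i. comm_group (G i)"
    and fin: "\<And>i. finite (carrier (G i))"
    and coprime: "\<And>i. \<not> CHAR('f) dvd card (carrier (G i))"
    and Ssub: "\<And>i. S i \<subseteq> characters (G i)"
    and Sgal: "\<And>i. galois_stable (S i)"
    and Gtend: "filterlim (\<lambda>i. real (card (carrier (G i)))) at_top sequentially"
    and \<delta>: "0 < \<delta>" "\<delta> < 1"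
    and c: "c > 0"
    and H: "\<forall>\<^sub>F i in sequentially.
              real (card (generate (char_group (G i)) (S i))) \<ge> c * real (card (carrier (G i))) powr \<delta>"
  shows "\<forall>\<epsilon>>0. \<exists>C>0. \<forall>\<^sub>F i in sequentially.
           real (card (S i)) \<ge> C * ln (real (card (carrier (G i)))) powr (1 - \<epsilon>)"
proof (intro allI impI)
  fix \<epsilon> :: real assume "\<epsilon> > 0"
  obtain e :: nat where e2: "e \<ge> 2" and sig: "(\<lambda>x::'f alg_closure. x ^ e) \<in> galois_auts"
    using frob_exists by blast
  have injsig: "inj (\<lambda>x::'f alg_closure. x ^ e)" using sig by (simp add: galois_auts_def bij_def)
  have bound: "card (generate (char_group (G i)) (S i)) \<le> e ^ card (S i)"
    if fg: "finite (generate (char_group (G i)) (S i))" for i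
  proof -
    define K where "K = (char_group (G i) :: ('a \<Rightarrow> 'f alg_closure) monoid)"
    interpret K: comm_group K unfolding K_def
      using grp[of i] by (intro char_group_comm) (simp add: comm_group_def)
    have SK: "S i \<subseteq> carrier K" using Ssub by (simp add: K_def char_group_def)
    have finS: "finite (S i)"
      using fg unfolding K_def[symmetric] by (rule finite_subset[rotated]) (auto intro: generate.incl)
    have st: "\<forall>x\<in>S i. x [^]\<^bsub>K\<^esub> e \<in> S i"
    proof
      fix x assume "x \<in> S i"
      hence "(\<lambda>x::'f alg_closure. x ^ e) \<circ> x \<in> S i" using Sgal[of i] sig
        unfolding galois_stable_def by blast
      thus "x [^]\<^bsub>K\<^esub> e \<in> S i" by (simp add: K_def char_pow comp_def)
    qed
    have inj: "inj_on (\<lambda>x. x [^]\<^bsub>K\<^esub> e) (carrier K)"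
    proof (rule inj_onI)
      fix x y assume "x [^]\<^bsub>K\<^esub> e = y [^]\<^bsub>K\<^esub> e"
      hence "\<And>a. x a ^ e = y a ^ e" by (simp add: K_def char_pow fun_eq_iff)
      thus "x = y" using injsig by (auto intro!: ext dest: injD)
    qed
    have "finite (generate K (S i)) \<and> card (generate K (S i)) \<le> e ^ card (S i)"
      by (rule K.gen_bound[OF e2 inj finS SK st])
    thus ?thesis by (simp add: K_def)
  qed
  define L where "L = max 1 (- 2 * ln c / \<delta>)"
  define C where "C = \<delta> / (2 * ln (real e))"
  have lne: "ln (real e) > 0" using e2 by simp
  have Cpos: "C > 0" unfolding C_def using \<delta> lne by simp
  have ev: "\<forall>\<^sub>F i in sequentially. exp L \<le> real (card (carrier (G i)))"
    using Gtend by (simp add: filterlim_at_top)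
  show "\<exists>C>0. \<forall>\<^sub>F i in sequentially.
           real (card (S i)) \<ge> C * ln (real (card (carrier (G i)))) powr (1 - \<epsilon>)"
  proof (intro exI conjI)
    show "C > 0" by (rule Cpos)
    show "\<forall>\<^sub>F i in sequentially.
           real (card (S i)) \<ge> C * ln (real (card (carrier (G i)))) powr (1 - \<epsilon>)"
      using ev H
    proof eventually_elim
      case (elim i)
      define N where "N = real (card (carrier (G i)))"
      define g where "g = card (generate (char_group (G i)) (S i))"
      define s where "s = card (S i)"
      have NL: "exp L \<le> N" using elim N_def by simp
      have "exp L > 0" by simp
      hence Npos: "N > 0" using NL by linarith
      have lnN: "ln N \<ge> L"
      proof -
        have "ln (exp L) \<le> ln N" using NL Npos by (subst ln_le_cancel_iff) auto
        thus ?thesis by simp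
      qed
      have lnN1: "ln N \<ge> 1" using lnN by (simp add: L_def)
      have cg: "c * N powr \<delta> \<le> real g" using elim N_def g_def by simp
      have cNpos: "c * N powr \<delta> > 0" using c Npos by simp
      have gpos: "g > 0"
      proof (rule ccontr)
        assume "\<not> g > 0"
        hence "g = 0" by simp
        thus False using cg cNpos by simp
      qed
      have "finite (generate (char_group (G i)) (S i))"
        using gpos unfolding g_def by (rule card_ge_0_finite)
      hence gb: "g \<le> e ^ s" unfolding g_def s_def by (rule bound)
      have rgb: "real g \<le> real e ^ s"
      proof -
        have "real g \<le> real (e ^ s)" using gb by (simp only: of_nat_le_iff)
        thus ?thesis by (simp only: of_nat_power)
      qed
      have epos: "e > 0" using e2 by linarith
      have eps: "0 < real e ^ s" using epos by simp
      have "ln (c * N powr \<delta>) \<le> ln (real g)" using cg cNpos by (subst ln_le_cancel_iff) auto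
      also have "\<dots> \<le> ln (real e ^ s)" using rgb gpos eps
        by (subst ln_le_cancel_iff) auto
      also have "\<dots> = real s * ln (real e)" using e2 by (simp add: ln_realpow)
      finally have key: "ln c + \<delta> * ln N \<le> real s * ln (real e)"
        using c Npos by (simp add: ln_mult ln_powr)
      have "- 2 * ln c / \<delta> \<le> ln N" using lnN by (simp add: L_def)
      hence "(- 2 * ln c / \<delta>) * \<delta> \<le> ln N * \<delta>" using \<delta> by (intro mult_right_mono) auto
      moreover have "(- 2 * ln c / \<delta>) * \<delta> = - 2 * ln c" using \<delta> by simp
      ultimately have "- 2 * ln c \<le> \<delta> * ln N" by (simp add: mult.commute)
      hence "\<delta> * ln N / 2 \<le> real s * ln (real e)" using key by linarith
      hence h1: "\<delta> * ln N / 2 / ln (real e) \<le> real s" using pos_divide_le_eq[OF lne] by blast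
      have h2: "C * ln N = \<delta> * ln N / 2 / ln (real e)" unfolding C_def by simp
      have "ln N powr (1 - \<epsilon>) \<le> ln N powr 1"
        using lnN1 \<open>\<epsilon> > 0\<close> by (intro powr_mono) auto
      hence "ln N powr (1 - \<epsilon>) \<le> ln N" using lnN1 by simp
      hence "C * ln N powr (1 - \<epsilon>) \<le> C * ln N" using Cpos by (intro mult_left_mono) auto
      hence "C * ln N powr (1 - \<epsilon>) \<le> real s" using h1 h2 by linarith
      thus ?case by (simp add: N_def s_def)
    qed
  qed
qed

end
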